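(* Assume that for $i=0,1$ the matrix $(\mathbf{X}^i)^T\mathbf{W}^i\mathbf{X}^i$ is invertible. Then $S_{d,\mathbf{w}^\lambda}$ is the unique linear subdivision scheme whose rule producing $(S\mathbf{f})_{2j+i}$ has the form $\sum_{m\in M_i} a_m f_{j+(m+i)/2}$ ($i=0,1$), which reproduces $\Pi_d$, and whose sub-masks are of the form $\mathbf{a}^i=\mathbf{W}^i\mathbf{X}^i\boldsymbol{\alpha}^i$ for some $\boldsymbol{\alpha}^i\in\mathbb{R}^{d+1}$, $i=0,1$.
   Context: Let $\phi:[0,1]\to[0,1]$ be non-increasing with $\phi(0)=1$, $\omega(x)=\phi(|x|)$ for $|x|\le1$ and $0$ otherwise, $\lambda\in(0,\infty)\setminus\mathbb{N}$, and $w^\lambda_m=\omega(m/\lambda)$, $m\in\mathbb{Z}$. Let $d\ge0$ be an integer, $\Pi_d$ the real polynomials of degree at most $d$, and $A(x)=(1,x,\ldots,x^d)^T$. For $i\in\{0,1\}$ let $M_i=\{m\in\mathbb{Z}: m\equiv i\pmod 2,\ |m|<\lambda\}$, let $\mathbf{X}^i$ be the $|M_i|\times(d+1)$ matrix whose rows are $A(m)^T$, $m\in M_i$ in increasing order, and $\mathbf{W}^i$ the diagonal matrix with diagonal $(w^\lambda_m)_{m\in M_i}$. The weighted local polynomial regression (WLPR) scheme $S_{d,\mathbf{w}^\lambda}$ maps $\mathbf{f}=(f_j)_{j\in\mathbb{Z}}$ to $(S\mathbf{f})_{2j+i}=\hat p(0)$ ($i\in\{0,1\}$, $j\in\mathbb{Z}$),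 where $\hat p$ minimizes $\sum_{m\in M_i} w^\lambda_m(f_{j+(m+i)/2}-p(m))^2$ over $p\in\Pi_d$. Under the invertibility assumption the minimizer is unique and $(S\mathbf{f})_{2j+i}=\sum_{m\in M_i}a_m f_{j+(m+i)/2}$; the sub-masks are the column vectors $\mathbf{a}^i=(a_m)_{m\in M_i}$ (in increasing order of $m$). A linear scheme $S$ reproduces $\Pi_d$ if $S\{p(2j)\}_{j\in\mathbb{Z}}=\{p(j)\}_{j\in\mathbb{Z}}$ for every $p\in\Pi_d$. *)

theory Defs
  imports Complex_Main "Jordan_Normal_Form.Matrix" "HOL-Computational_Algebra.Polynomial"
begin

definition omega :: "(real \<Rightarrow> real) \<Rightarrow> real \<Rightarrow> real" where
  "omega \<phi> x = (if \<bar>x\<bar> \<le> 1 then \<phi> \<bar>x\<bar> else 0)"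

definition wt :: "(real \<Rightarrow> real) \<Rightarrow> real \<Rightarrow> int \<Rightarrow> real" where
  "wt \<phi> lam m = omega \<phi> (of_int m / lam)"

definition Mset :: "real \<Rightarrow> int \<Rightarrow> int set" where
  "Mset lam i = {m. m mod 2 = i \<and> of_int \<bar>m\<bar> < lam}"

definition Mlist :: "real \<Rightarrow> int \<Rightarrow> int list" where
  "Mlist lam i = sorted_list_of_set (Mset lam i)"

definition Xmat :: "real \<Rightarrow> nat \<Rightarrow> int \<Rightarrow> real mat" where
  "Xmat lam d i = mat (length (Mlist lam i)) (d + 1)
      (\<lambda>(r, c). (of_int (Mlist lam i ! r)) ^ c)"

definition Wmat :: "(real \<Rightarrow> real) \<Rightarrow> real \<Rightarrow> int \<Rightarrow> real mat" where
  "Wmat \<phi> lam i = mat (length (Mlist lam i)) (length (Mlist lam i))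
      (\<lambda>(r, c). if r = c then wt \<phi> lam (Mlist lam i ! r) else 0)"

definition lin_scheme :: "real \<Rightarrow> (int \<Rightarrow> real) \<Rightarrow> (int \<Rightarrow> real) \<Rightarrow> int \<Rightarrow> real" where
  "lin_scheme lam a f k =
     (let i = k mod 2; j = k div 2 in
       (\<Sum>m\<in>Mset lam i. a m * f (j + (m + i) div 2)))"

definition submask :: "real \<Rightarrow> (int \<Rightarrow> real) \<Rightarrow> int \<Rightarrow> real vec" where
  "submask lam a i = vec (length (Mlist lam i)) (\<lambda>r. a (Mlist lam i ! r))"

definition reproduces :: "nat \<Rightarrow> ((int \<Rightarrow> real) \<Rightarrow> int \<Rightarrow> real) \<Rightarrow> bool" where
  "reproduces d S \<longleftrightarrow>
     (\<forall>p :: real poly. degree p \<le> d \<longrightarrow>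
        S (\<lambda>j. poly p (2 * of_int j)) = (\<lambda>j. poly p (of_int j)))"

definition wls_obj :: "(real \<Rightarrow> real) \<Rightarrow> real \<Rightarrow> (int \<Rightarrow> real) \<Rightarrow> int \<Rightarrow> int \<Rightarrow> real poly \<Rightarrow> real" where
  "wls_obj \<phi> lam f i j p =
     (\<Sum>m\<in>Mset lam i. wt \<phi> lam m * (f (j + (m + i) div 2) - poly p (of_int m))^2)"

definition wlpr :: "(real \<Rightarrow> real) \<Rightarrow> real \<Rightarrow> nat \<Rightarrow> (int \<Rightarrow> real) \<Rightarrow> int \<Rightarrow> real" where
  "wlpr \<phi> lam d f k =
     (let i = k mod 2; j = k div 2 in
       poly (THE p. degree p \<le> d \<and>
                (\<forall>q. degree q \<le> d \<longrightarrow> wls_obj \<phi> lam f i j p \<le> wls_obj \<phi> lam f i j q)) 0)"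

definition admissible_mask :: "(real \<Rightarrow> real) \<Rightarrow> real \<Rightarrow> nat \<Rightarrow> (int \<Rightarrow> real) \<Rightarrow> bool" where
  "admissible_mask \<phi> lam d a \<longleftrightarrow>
     reproduces d (lin_scheme lam a) \<and>
     (\<forall>i\<in>{0,1}. \<exists>\<alpha> \<in> carrier_vec (d + 1).
        submask lam a i = Wmat \<phi> lam i *\<^sub>v (Xmat lam d i *\<^sub>v \<alpha>))"

end

theory Submission
  imports Defs
begin

definition Xv :: "nat \<Rightarrow> (nat \<Rightarrow> real) \<Rightarrow> int \<Rightarrow> real" where
  "Xv d v m = (\<Sum>l\<le>d. v l * real_of_int m ^ l)"

definition Gf :: "(real \<Rightarrow> real) \<Rightarrow> real \<Rightarrow> nat \<Rightarrow> int \<Rightarrow> (nat \<Rightarrow> real) \<Rightarrow> nat \<Rightarrow> real" where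
  "Gf \<phi> lam d i v k = (\<Sum>m\<in>Mset lam i. wt \<phi> lam m * real_of_int m ^ k * Xv d v m)"

lemma finite_Mset: "finite (Mset lam i)"
proof (rule finite_subset)
  show "Mset lam i \<subseteq> {-\<lceil>lam\<rceil>..\<lceil>lam\<rceil>}"
  proof
    fix m assume "m \<in> Mset lam i"
    then have "real_of_int \<bar>m\<bar> < lam" by (simp add: Mset_def)
    then have "\<bar>m\<bar> < \<lceil>lam\<rceil>" by (meson le_of_int_ceiling less_le_trans of_int_less_iff)
    then show "m \<in> {-\<lceil>lam\<rceil>..\<lceil>lam\<rceil>}" by auto
  qed
qed auto

lemma set_Mlist: "set (Mlist lam i) = Mset lam i" and distinct_Mlist: "distinct (Mlist lam i)"
  using finite_Mset by (auto simp: Mlist_def)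

lemma sum_Mlist: "(\<Sum>r<length (Mlist lam i). g (Mlist lam i ! r)) = (\<Sum>m\<in>Mset lam i. g m)"
proof -
  have "bij_betw ((!) (Mlist lam i)) {..<length (Mlist lam i)} (Mset lam i)"
    using bij_betw_nth[OF distinct_Mlist] set_Mlist by auto
  then show ?thesis by (rule sum.reindex_bij_betw)
qed

lemma X_mult: "v \<in> carrier_vec (d+1) \<Longrightarrow> Xmat lam d i *\<^sub>v v = vec (length (Mlist lam i)) (\<lambda>r. Xv d (\<lambda>l. v$l) (Mlist lam i ! r))"
  by (intro eq_vecI) (auto simp: Xmat_def Xv_def scalar_prod_def row_def
        atLeast0LessThan lessThan_Suc_atMost[symmetric] mult.commute intro!: sum.cong)

lemma W_mult: "Wmat \<phi> lam i *\<^sub>v vec (length (Mlist lam i)) g = vec (length (Mlist lam i)) (\<lambda>r. wt \<phi> lam (Mlist lam i ! r) * g r)"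
proof (intro eq_vecI)
  let ?n = "length (Mlist lam i)"
  let ?M = "Mlist lam i"
  fix r assume r: "r < dim_vec (vec ?n (\<lambda>r. wt \<phi> lam (?M ! r) * g r))"
  then have r': "r < ?n" by simp
  have "(\<Sum>c\<in>{0..<?n}. (if r = c then wt \<phi> lam (?M ! r) else 0) * g c)
     = (\<Sum>c\<in>{0..<?n}. (if r = c then wt \<phi> lam (?M ! r) * g c else 0))"
    by (intro sum.cong) auto
  also have "\<dots> = wt \<phi> lam (?M ! r) * g r" using r' by (simp add: sum.delta)
  finally show "(Wmat \<phi> lam i *\<^sub>v vec ?n g) $ r = vec ?n (\<lambda>r. wt \<phi> lam (?M ! r) * g r) $ r"
    using r' by (simp add: Wmat_def scalar_prod_def row_def)
qed (simp add: Wmat_def)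

lemma G_mult:
  assumes v: "v \<in> carrier_vec (d+1)"
  shows "(transpose_mat (Xmat lam d i) * Wmat \<phi> lam i * Xmat lam d i) *\<^sub>v v
     = vec (d+1) (\<lambda>k. Gf \<phi> lam d i (\<lambda>l. v$l) k)"
proof -
  let ?n = "length (Mlist lam i)"
  let ?M = "Mlist lam i"
  have X: "Xmat lam d i \<in> carrier_mat ?n (d+1)" by (simp add: Xmat_def)
  have W: "Wmat \<phi> lam i \<in> carrier_mat ?n ?n" by (simp add: Wmat_def)
  have Xt: "transpose_mat (Xmat lam d i) \<in> carrier_mat (d+1) ?n" using X by simp
  have XtW: "transpose_mat (Xmat lam d i) * Wmat \<phi> lam i \<in> carrier_mat (d+1) ?n"
    by (rule mult_carrier_mat[OF Xt W])
  have Xv: "Xmat lam d i *\<^sub>v v \<in> carrier_vec ?n" by (rule mult_mat_vec_carrier[OF X v])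
  have "(transpose_mat (Xmat lam d i) * Wmat \<phi> lam i * Xmat lam d i) *\<^sub>v v
     = (transpose_mat (Xmat lam d i) * Wmat \<phi> lam i) *\<^sub>v (Xmat lam d i *\<^sub>v v)"
    by (rule assoc_mult_mat_vec[OF XtW X v])
  also have "\<dots> = transpose_mat (Xmat lam d i) *\<^sub>v (Wmat \<phi> lam i *\<^sub>v (Xmat lam d i *\<^sub>v v))"
    by (rule assoc_mult_mat_vec[OF Xt W Xv])
  also have "Xmat lam d i *\<^sub>v v = vec ?n (\<lambda>r. Xv d (\<lambda>l. v$l) (?M ! r))"
    by (rule X_mult[OF v])
  also have "Wmat \<phi> lam i *\<^sub>v vec ?n (\<lambda>r. Xv d (\<lambda>l. v$l) (?M ! r))
      = vec ?n (\<lambda>r. wt \<phi> lam (?M ! r) * Xv d (\<lambda>l. v$l) (?M ! r))"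
    by (rule W_mult)
  also have "transpose_mat (Xmat lam d i) *\<^sub>v vec ?n (\<lambda>r. wt \<phi> lam (?M ! r) * Xv d (\<lambda>l. v$l) (?M ! r))
     = vec (d+1) (\<lambda>k. Gf \<phi> lam d i (\<lambda>l. v$l) k)"
  proof (intro eq_vecI)
    fix k assume "k < dim_vec (vec (d+1) (\<lambda>k. Gf \<phi> lam d i (\<lambda>l. v$l) k))"
    then have k: "k < d+1" by simp
    have "(transpose_mat (Xmat lam d i) *\<^sub>v vec ?n (\<lambda>r. wt \<phi> lam (?M ! r) * Xv d (\<lambda>l. v$l) (?M ! r))) $ k
      = (\<Sum>r<?n. wt \<phi> lam (?M ! r) * real_of_int (?M ! r) ^ k * Xv d (\<lambda>l. v$l) (?M ! r))"
      using k X by (auto simp: Xmat_def scalar_prod_def row_def atLeast0LessThan intro!: sum.cong)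
    also have "\<dots> = Gf \<phi> lam d i (\<lambda>l. v$l) k" unfolding Gf_def by (rule sum_Mlist)
    finally show "(transpose_mat (Xmat lam d i) *\<^sub>v vec ?n (\<lambda>r. wt \<phi> lam (?M ! r) * Xv d (\<lambda>l. v$l) (?M ! r))) $ k
      = vec (d+1) (\<lambda>k. Gf \<phi> lam d i (\<lambda>l. v$l) k) $ k" using k by simp
  qed (use X in simp)
  finally show ?thesis .
qed

lemma inv_facts:
  fixes G :: "real mat"
  assumes "invertible_mat G" "G \<in> carrier_mat N N"
  shows "\<And>v. v \<in> carrier_vec N \<Longrightarrow> G *\<^sub>v v = 0\<^sub>v N \<Longrightarrow> v = 0\<^sub>v N"
    and "\<And>y. y \<in> carrier_vec N \<Longrightarrow> \<exists>c\<in>carrier_vec N. G *\<^sub>v c = y"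
proof -
  obtain B where B1: "G * B = 1\<^sub>m N" and B2: "B * G = 1\<^sub>m (dim_row B)"
    using assms unfolding invertible_mat_def inverts_mat_def by auto
  have dB: "dim_row B = N" proof -
    have "dim_col (B * G) = N" using assms(2) by simp
    then show ?thesis using B2 by simp
  qed
  have dB2: "dim_col B = N" proof -
    have "dim_col (G * B) = dim_col B" by simp
    then show ?thesis using B1 by simp
  qed
  have Bc: "B \<in> carrier_mat N N" using dB dB2 by auto
  show "\<And>v. v \<in> carrier_vec N \<Longrightarrow> G *\<^sub>v v = 0\<^sub>v N \<Longrightarrow> v = 0\<^sub>v N"
  proof -
    fix v :: "real vec" assume v: "v \<in> carrier_vec N" and "G *\<^sub>v v = 0\<^sub>v N"
    moreover have "B *\<^sub>v 0\<^sub>v N = 0\<^sub>v N" using Bc by (intro eq_vecI) auto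
    ultimately have "B *\<^sub>v (G *\<^sub>v v) = 0\<^sub>v N" by simp
    then have "(B * G) *\<^sub>v v = 0\<^sub>v N" using Bc assms(2) v by simp
    then show "v = 0\<^sub>v N" using B2 dB v by simp
  qed
  show "\<And>y. y \<in> carrier_vec N \<Longrightarrow> \<exists>c\<in>carrier_vec N. G *\<^sub>v c = y"
  proof -
    fix y :: "real vec" assume y: "y \<in> carrier_vec N"
    have "G *\<^sub>v (B *\<^sub>v y) = (G * B) *\<^sub>v y" using Bc assms(2) y by simp
    also have "\<dots> = y" using B1 y by simp
    finally show "\<exists>c\<in>carrier_vec N. G *\<^sub>v c = y" using Bc y mult_mat_vec_carrier by blast
  qed
qed

lemma Xv_cong: "(\<And>l. l \<le> d \<Longrightarrow> u l = v l) \<Longrightarrow> Xv d u m = Xv d v m"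
  unfolding Xv_def by (intro sum.cong) auto

lemma Gf_cong: "(\<And>l. l \<le> d \<Longrightarrow> u l = v l) \<Longrightarrow> Gf \<phi> lam d i u k = Gf \<phi> lam d i v k"
  unfolding Gf_def using Xv_cong by (metis (no_types, lifting) sum.cong)

lemma Xv_diff: "Xv d (\<lambda>l. u l - v l) m = Xv d u m - Xv d v m"
  unfolding Xv_def by (simp add: left_diff_distrib sum_subtractf)

lemma swap_sum:
  "(\<Sum>l\<le>d. u l * (\<Sum>m\<in>A. w m * real_of_int m ^ l * F m)) = (\<Sum>m\<in>A. w m * Xv d u m * F m)"
proof -
  have "(\<Sum>l\<le>d. u l * (\<Sum>m\<in>A. w m * real_of_int m ^ l * F m))
      = (\<Sum>l\<le>d. \<Sum>m\<in>A. w m * (u l * real_of_int m ^ l) * F m)"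
    by (simp add: sum_distrib_left mult_ac)
  also have "\<dots> = (\<Sum>m\<in>A. \<Sum>l\<le>d. w m * (u l * real_of_int m ^ l) * F m)"
    by (rule sum.swap)
  also have "\<dots> = (\<Sum>m\<in>A. w m * Xv d u m * F m)"
    unfolding Xv_def by (simp add: sum_distrib_left sum_distrib_right)
  finally show ?thesis .
qed

lemma poly_sum_le:
  fixes q :: "real poly"
  assumes "degree q \<le> d"
  shows "poly q x = (\<Sum>l\<le>d. coeff q l * x ^ l)"
proof -
  have "poly q x = (\<Sum>l\<le>degree q. coeff q l * x ^ l)" by (simp add: poly_altdef)
  also have "\<dots> = (\<Sum>l\<le>d. coeff q l * x ^ l)"
    using assms by (intro sum.mono_neutral_left) (auto simp: coeff_eq_0)
  finally show ?thesis .
qed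


lemma wnn_lemma:
  assumes "\<And>x. 0 \<le> x \<Longrightarrow> x \<le> 1 \<Longrightarrow> 0 \<le> \<phi> x \<and> \<phi> x \<le> 1"
  shows "0 \<le> wt \<phi> lam m"
  using assms unfolding wt_def omega_def by auto

lemma twice_div: "m mod 2 = i \<Longrightarrow> i \<in> {0, 1::int} \<Longrightarrow> 2 * ((m + i) div 2) = m + i"
  by auto presburger+

lemma Gf_swap: "(\<Sum>l\<le>d. u l * Gf \<phi> lam d i v l) = (\<Sum>m\<in>Mset lam i. wt \<phi> lam m * Xv d u m * Xv d v m)"
  unfolding Gf_def by (rule swap_sum)

lemma reprod:
  fixes q :: "real poly"
  assumes a: "\<forall>m\<in>Mset lam i. a m = wt \<phi> lam m * Xv d \<alpha> m"
    and \<alpha>: "\<And>l. l \<le> d \<Longrightarrow> Gf \<phi> lam d i \<alpha> l = (if l = 0 then 1 else 0)"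
    and q: "degree q \<le> d"
  shows "(\<Sum>m\<in>Mset lam i. a m * poly q (of_int m)) = poly q 0"
proof -
  have "(\<Sum>m\<in>Mset lam i. a m * poly q (of_int m))
      = (\<Sum>m\<in>Mset lam i. wt \<phi> lam m * Xv d (coeff q) m * Xv d \<alpha> m)"
    using a by (intro sum.cong) (auto simp: poly_sum_le[OF q] Xv_def)
  also have "\<dots> = (\<Sum>l\<le>d. coeff q l * Gf \<phi> lam d i \<alpha> l)" by (rule Gf_swap[symmetric])
  also have "\<dots> = (\<Sum>l\<le>d. if l = 0 then coeff q l else 0)" using \<alpha> by (intro sum.cong) auto
  also have "\<dots> = coeff q 0" by (simp add: sum.delta)
  finally show ?thesis by (simp add: poly_0_coeff_0)
qed

context
  fixes \<phi> lam d i
  assumes inv: "invertible_mat (transpose_mat (Xmat lam d i) * Wmat \<phi> lam i * Xmat lam d i)"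
    and wnn: "\<And>m. 0 \<le> wt \<phi> lam m"
begin

lemma G_carrier: "transpose_mat (Xmat lam d i) * Wmat \<phi> lam i * Xmat lam d i \<in> carrier_mat (d+1) (d+1)"
proof -
  have X: "Xmat lam d i \<in> carrier_mat (length (Mlist lam i)) (d+1)" by (simp add: Xmat_def)
  have W: "Wmat \<phi> lam i \<in> carrier_mat (length (Mlist lam i)) (length (Mlist lam i))" by (simp add: Wmat_def)
  have Xt: "transpose_mat (Xmat lam d i) \<in> carrier_mat (d+1) (length (Mlist lam i))" using X by simp
  show ?thesis by (rule mult_carrier_mat[OF mult_carrier_mat[OF Xt W] X])
qed

lemma Gf_inj:
  assumes "\<And>k. k \<le> d \<Longrightarrow> Gf \<phi> lam d i v k = 0" "l \<le> d"
  shows "v l = 0"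
proof -
  let ?v = "vec (d+1) v"
  have "(transpose_mat (Xmat lam d i) * Wmat \<phi> lam i * Xmat lam d i) *\<^sub>v ?v
     = vec (d+1) (\<lambda>k. Gf \<phi> lam d i (\<lambda>l. ?v$l) k)" by (rule G_mult) simp
  also have "\<dots> = 0\<^sub>v (d+1)"
  proof (intro eq_vecI)
    fix k assume "k < dim_vec (0\<^sub>v (d+1) :: real vec)"
    then have k: "k \<le> d" by simp
    have "Gf \<phi> lam d i (\<lambda>l. ?v$l) k = Gf \<phi> lam d i v k" by (rule Gf_cong) simp
    then show "vec (d+1) (\<lambda>k. Gf \<phi> lam d i (\<lambda>l. ?v$l) k) $ k = 0\<^sub>v (d+1) $ k"
      using k assms(1) by simp
  qed simp
  finally have G0: "(transpose_mat (Xmat lam d i) * Wmat \<phi> lam i * Xmat lam d i) *\<^sub>v ?v = 0\<^sub>v (d+1)" .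
  have "?v = 0\<^sub>v (d+1)" by (rule inv_facts(1)[OF inv G_carrier vec_carrier G0])
  then have "?v $ l = 0" using assms(2) by simp
  then show ?thesis using assms(2) by simp
qed

lemma Gf_surj: "\<exists>c. \<forall>k\<le>d. Gf \<phi> lam d i c k = y k"
proof -
  obtain c where c: "c \<in> carrier_vec (d+1)"
    "(transpose_mat (Xmat lam d i) * Wmat \<phi> lam i * Xmat lam d i) *\<^sub>v c = vec (d+1) y"
    using inv_facts(2)[OF inv G_carrier, of "vec (d+1) y"] by auto
  have "\<forall>k\<le>d. Gf \<phi> lam d i (\<lambda>l. c$l) k = y k"
  proof (intro allI impI)
    fix k assume k: "k \<le> d"
    have "vec (d+1) (\<lambda>k. Gf \<phi> lam d i (\<lambda>l. c$l) k) $ k = vec (d+1) y $ k"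
      using c G_mult[OF c(1), of lam i \<phi>] by simp
    then show "Gf \<phi> lam d i (\<lambda>l. c$l) k = y k" using k by simp
  qed
  then show ?thesis by blast
qed

lemma posdef:
  assumes "(\<Sum>m\<in>Mset lam i. wt \<phi> lam m * (Xv d v m)^2) = 0" "l \<le> d"
  shows "v l = 0"
proof (rule Gf_inj[OF _ assms(2)])
  fix k assume "k \<le> d"
  have "\<forall>m\<in>Mset lam i. wt \<phi> lam m * (Xv d v m)^2 = 0"
  proof -
    have nn: "\<And>m. 0 \<le> wt \<phi> lam m * (Xv d v m)^2" using wnn by simp
    show ?thesis using assms(1) by (subst (asm) sum_nonneg_eq_0_iff[OF finite_Mset]) (use nn in auto)
  qed
  then have z: "\<forall>m\<in>Mset lam i. wt \<phi> lam m * Xv d v m = 0" by simp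
  show "Gf \<phi> lam d i v k = 0" unfolding Gf_def
  proof (intro sum.neutral ballI)
    fix m assume "m \<in> Mset lam i"
    then have "wt \<phi> lam m * Xv d v m = 0" using z by blast
    then have "real_of_int m ^ k * (wt \<phi> lam m * Xv d v m) = 0" by simp
    then show "wt \<phi> lam m * real_of_int m ^ k * Xv d v m = 0" by (simp add: mult_ac)
  qed
qed

lemma wls_split:
  fixes F :: "int \<Rightarrow> real"
  assumes c: "\<And>k. k \<le> d \<Longrightarrow> Gf \<phi> lam d i c k = (\<Sum>m\<in>Mset lam i. wt \<phi> lam m * real_of_int m ^ k * F m)"
  shows "(\<Sum>m\<in>Mset lam i. wt \<phi> lam m * (F m - Xv d b m)^2)
       = (\<Sum>m\<in>Mset lam i. wt \<phi> lam m * (F m - Xv d c m)^2)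
         + (\<Sum>m\<in>Mset lam i. wt \<phi> lam m * (Xv d (\<lambda>l. c l - b l) m)^2)"
proof -
  let ?u = "\<lambda>l. c l - b l"
  have orth: "(\<Sum>m\<in>Mset lam i. wt \<phi> lam m * Xv d ?u m * (F m - Xv d c m)) = 0"
  proof -
    have "(\<Sum>m\<in>Mset lam i. wt \<phi> lam m * Xv d ?u m * (F m - Xv d c m))
       = (\<Sum>l\<le>d. ?u l * (\<Sum>m\<in>Mset lam i. wt \<phi> lam m * real_of_int m ^ l * (F m - Xv d c m)))"
      by (rule swap_sum[symmetric])
    also have "\<dots> = 0"
    proof (intro sum.neutral ballI)
      fix l assume "l \<in> {..d}"
      then have l: "l \<le> d" by simp
      have "(\<Sum>m\<in>Mset lam i. wt \<phi> lam m * real_of_int m ^ l * (F m - Xv d c m))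
          = (\<Sum>m\<in>Mset lam i. wt \<phi> lam m * real_of_int m ^ l * F m) - Gf \<phi> lam d i c l"
        by (simp add: Gf_def right_diff_distrib sum_subtractf)
      also have "\<dots> = 0" using c[OF l] by simp
      finally show "?u l * (\<Sum>m\<in>Mset lam i. wt \<phi> lam m * real_of_int m ^ l * (F m - Xv d c m)) = 0"
        by simp
    qed
    finally show ?thesis .
  qed
  have pt: "wt \<phi> lam m * (F m - Xv d b m)^2 = wt \<phi> lam m * (F m - Xv d c m)^2
      + 2 * (wt \<phi> lam m * Xv d ?u m * (F m - Xv d c m)) + wt \<phi> lam m * (Xv d ?u m)^2" for m
    by (simp add: Xv_diff power2_eq_square algebra_simps)
  have "(\<Sum>m\<in>Mset lam i. wt \<phi> lam m * (F m - Xv d b m)^2)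
     = (\<Sum>m\<in>Mset lam i. wt \<phi> lam m * (F m - Xv d c m)^2)
      + 2 * (\<Sum>m\<in>Mset lam i. wt \<phi> lam m * Xv d ?u m * (F m - Xv d c m))
      + (\<Sum>m\<in>Mset lam i. wt \<phi> lam m * (Xv d ?u m)^2)"
    unfolding pt by (simp add: sum.distrib sum_distrib_left)
  then show ?thesis using orth by simp
qed

lemma wlpr_the:
  assumes c: "\<And>k. k \<le> d \<Longrightarrow> Gf \<phi> lam d i c k
      = (\<Sum>m\<in>Mset lam i. wt \<phi> lam m * real_of_int m ^ k * f (j + (m + i) div 2))"
  shows "(THE p. degree p \<le> d \<and> (\<forall>q. degree q \<le> d \<longrightarrow> wls_obj \<phi> lam f i j p \<le> wls_obj \<phi> lam f i j q))
     = (\<Sum>l\<le>d. monom (c l) l)"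
proof -
  let ?F = "\<lambda>m. f (j + (m + i) div 2)"
  let ?P = "(\<Sum>l\<le>d. monom (c l) l) :: real poly"
  have cP: "coeff ?P n = (if n \<le> d then c n else 0)" for n
    by (simp add: coeff_sum)
  have dP: "degree ?P \<le> d" by (rule degree_le) (simp add: cP)
  have obj: "wls_obj \<phi> lam f i j q = (\<Sum>m\<in>Mset lam i. wt \<phi> lam m * (?F m - Xv d (coeff q) m)^2)"
    if "degree q \<le> d" for q
    unfolding wls_obj_def using that by (intro sum.cong) (auto simp: poly_sum_le Xv_def mult.commute)
  have XP: "Xv d (coeff ?P) m = Xv d c m" for m by (rule Xv_cong) (simp add: cP)
  have split: "wls_obj \<phi> lam f i j q = wls_obj \<phi> lam f i j ?P
      + (\<Sum>m\<in>Mset lam i. wt \<phi> lam m * (Xv d (\<lambda>l. c l - coeff q l) m)^2)" if "degree q \<le> d" for q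
    using obj[OF that] obj[OF dP] wls_split[OF c, of "coeff q"] XP by simp
  have nn: "0 \<le> (\<Sum>m\<in>Mset lam i. wt \<phi> lam m * (Xv d v m)^2)" for v
    using wnn by (intro sum_nonneg) simp
  show ?thesis
  proof (rule the_equality)
    show "degree ?P \<le> d \<and> (\<forall>q. degree q \<le> d \<longrightarrow> wls_obj \<phi> lam f i j ?P \<le> wls_obj \<phi> lam f i j q)"
    proof (intro conjI allI impI)
      fix q :: "real poly" assume q: "degree q \<le> d"
      show "wls_obj \<phi> lam f i j ?P \<le> wls_obj \<phi> lam f i j q"
        using split[OF q] nn[of "\<lambda>l. c l - coeff q l"] by linarith
    qed (rule dP)
  next
    fix p assume p: "degree p \<le> d \<and> (\<forall>q. degree q \<le> d \<longrightarrow> wls_obj \<phi> lam f i j p \<le> wls_obj \<phi> lam f i j q)"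
    then have "wls_obj \<phi> lam f i j p \<le> wls_obj \<phi> lam f i j ?P" using dP by blast
    then have "(\<Sum>m\<in>Mset lam i. wt \<phi> lam m * (Xv d (\<lambda>l. c l - coeff p l) m)^2) = 0"
      using split[of p] p nn[of "\<lambda>l. c l - coeff p l"] by linarith
    then have eq: "c l - coeff p l = 0" if "l \<le> d" for l using posdef that by blast
    show "p = ?P"
    proof (rule poly_eqI)
      fix n show "coeff p n = coeff ?P n"
      proof (cases "n \<le> d")
        case True then show ?thesis using eq[OF True] cP by simp
      next
        case False then show ?thesis using p cP by (simp add: coeff_eq_0)
      qed
    qed
  qed
qed

lemma lin_eq:
  assumes a: "\<forall>m\<in>Mset lam i. a m = wt \<phi> lam m * Xv d \<alpha> m"
    and \<alpha>: "\<And>l. l \<le> d \<Longrightarrow> Gf \<phi> lam d i \<alpha> l = (if l = 0 then 1 else 0)"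
    and c: "\<And>k. k \<le> d \<Longrightarrow> Gf \<phi> lam d i c k = (\<Sum>m\<in>Mset lam i. wt \<phi> lam m * real_of_int m ^ k * F m)"
  shows "(\<Sum>m\<in>Mset lam i. a m * F m) = c 0"
proof -
  have "(\<Sum>m\<in>Mset lam i. a m * F m) = (\<Sum>m\<in>Mset lam i. wt \<phi> lam m * Xv d \<alpha> m * F m)"
    using a by (intro sum.cong) auto
  also have "\<dots> = (\<Sum>l\<le>d. \<alpha> l * (\<Sum>m\<in>Mset lam i. wt \<phi> lam m * real_of_int m ^ l * F m))"
    by (rule swap_sum[symmetric])
  also have "\<dots> = (\<Sum>l\<le>d. \<alpha> l * Gf \<phi> lam d i c l)" using c by (intro sum.cong) auto
  also have "\<dots> = (\<Sum>m\<in>Mset lam i. wt \<phi> lam m * Xv d \<alpha> m * Xv d c m)" by (rule Gf_swap)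
  also have "\<dots> = (\<Sum>m\<in>Mset lam i. wt \<phi> lam m * Xv d c m * Xv d \<alpha> m)" by (simp add: mult_ac)
  also have "\<dots> = (\<Sum>l\<le>d. c l * Gf \<phi> lam d i \<alpha> l)" by (rule Gf_swap[symmetric])
  also have "\<dots> = (\<Sum>l\<le>d. if l = 0 then c l else 0)" using \<alpha> by (intro sum.cong) auto
  also have "\<dots> = c 0" by (simp add: sum.delta)
  finally show ?thesis .
qed

end


lemma wlpr_val:
  assumes inv: "\<And>i. i \<in> {0, 1} \<Longrightarrow>
       invertible_mat (transpose_mat (Xmat lam d i) * Wmat \<phi> lam i * Xmat lam d i)"
    and wnn: "\<And>m. 0 \<le> wt \<phi> lam m"
    and c: "\<And>kk. kk \<le> d \<Longrightarrow> Gf \<phi> lam d (k mod 2) c kk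
      = (\<Sum>m\<in>Mset lam (k mod 2). wt \<phi> lam m * real_of_int m ^ kk * f (k div 2 + (m + k mod 2) div 2))"
  shows "wlpr \<phi> lam d f k = c 0"
proof -
  have "k mod 2 = 0 \<or> k mod 2 = 1" by presburger
  then have i: "k mod 2 \<in> {0, 1}" by blast
  have "wlpr \<phi> lam d f k = poly (\<Sum>l\<le>d. monom (c l) l) 0"
    unfolding wlpr_def Let_def using wlpr_the[OF inv[OF i] wnn c] by simp
  also have "\<dots> = c 0" by (simp add: poly_0_coeff_0 coeff_sum)
  finally show ?thesis .
qed

lemma scheme_eq:
  assumes inv: "\<And>i. i \<in> {0, 1} \<Longrightarrow>
       invertible_mat (transpose_mat (Xmat lam d i) * Wmat \<phi> lam i * Xmat lam d i)"
    and wnn: "\<And>m. 0 \<le> wt \<phi> lam m"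
    and H: "\<forall>i\<in>{0,1}. \<exists>\<alpha>. (\<forall>m\<in>Mset lam i. a m = wt \<phi> lam m * Xv d \<alpha> m)
              \<and> (\<forall>l\<le>d. Gf \<phi> lam d i \<alpha> l = (if l = 0 then 1 else 0))"
  shows "lin_scheme lam a = wlpr \<phi> lam d"
proof (rule ext, rule ext)
  fix f :: "int \<Rightarrow> real" and k :: int
  let ?i = "k mod 2"
  have "?i = 0 \<or> ?i = 1" by presburger
  then have i: "?i \<in> {0, 1}" by blast
  from bspec[OF H i] obtain \<alpha> where a\<alpha>: "(\<forall>m\<in>Mset lam ?i. a m = wt \<phi> lam m * Xv d \<alpha> m)
     \<and> (\<forall>l\<le>d. Gf \<phi> lam d ?i \<alpha> l = (if l = 0 then 1 else 0))" ..
  note a = conjunct1[OF a\<alpha>] and \<alpha> = conjunct2[OF a\<alpha>]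
  obtain c where c: "\<forall>kk\<le>d. Gf \<phi> lam d ?i c kk
      = (\<Sum>m\<in>Mset lam ?i. wt \<phi> lam m * real_of_int m ^ kk * f (k div 2 + (m + ?i) div 2))"
    using Gf_surj[OF inv[OF i] wnn, of "\<lambda>kk. \<Sum>m\<in>Mset lam ?i. wt \<phi> lam m * real_of_int m ^ kk * f (k div 2 + (m + ?i) div 2)"]
    by blast
  have "lin_scheme lam a f k = (\<Sum>m\<in>Mset lam ?i. a m * f (k div 2 + (m + ?i) div 2))"
    by (simp add: lin_scheme_def Let_def)
  also have "\<dots> = c 0" by (rule lin_eq[OF inv[OF i] wnn a]) (use \<alpha> c in auto)
  also have "\<dots> = wlpr \<phi> lam d f k" by (rule wlpr_val[OF inv wnn, symmetric]) (use c in auto)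
  finally show "lin_scheme lam a f k = wlpr \<phi> lam d f k" .
qed

lemma moment:
  assumes rep: "reproduces d (lin_scheme lam a)" and i: "i \<in> {0, 1::int}" and l: "l \<le> d"
  shows "(\<Sum>m\<in>Mset lam i. a m * real_of_int m ^ l) = (if l = 0 then 1 else 0)"
proof -
  let ?p = "[:- real_of_int i, 1:] ^ l"
  have dp: "degree ?p \<le> d" using l by (simp add: degree_linear_power)
  then have "lin_scheme lam a (\<lambda>j. poly ?p (2 * of_int j)) = (\<lambda>j. poly ?p (of_int j))"
    using rep unfolding reproduces_def by blast
  then have "lin_scheme lam a (\<lambda>j. poly ?p (2 * of_int j)) i = poly ?p (of_int i)" by metis
  moreover have "i mod 2 = i" "i div 2 = 0" using i by auto
  ultimately have "(\<Sum>m\<in>Mset lam i. a m * poly ?p (2 * of_int ((m + i) div 2))) = poly ?p (of_int i)"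
    by (simp add: lin_scheme_def Let_def)
  moreover have "(\<Sum>m\<in>Mset lam i. a m * poly ?p (2 * of_int ((m + i) div 2)))
      = (\<Sum>m\<in>Mset lam i. a m * real_of_int m ^ l)"
  proof (intro sum.cong refl)
    fix m assume "m \<in> Mset lam i"
    then have "m mod 2 = i" by (simp add: Mset_def)
    then have "2 * ((m + i) div 2) = m + i" by (rule twice_div[OF _ i])
    then have "2 * real_of_int ((m + i) div 2) = real_of_int m + real_of_int i"
      by (metis of_int_add of_int_mult of_int_numeral)
    then show "a m * poly ?p (2 * of_int ((m + i) div 2)) = a m * real_of_int m ^ l"
      by (simp add: poly_power)
  qed
  ultimately show ?thesis by (simp add: poly_power power_0_left)
qed


theorem theorem3p4:
  fixes \<phi> :: "real \<Rightarrow> real" and lam :: real and d :: nat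
  assumes phi_range: "\<And>x. 0 \<le> x \<Longrightarrow> x \<le> 1 \<Longrightarrow> 0 \<le> \<phi> x \<and> \<phi> x \<le> 1"
    and phi_mono: "\<And>x y. 0 \<le> x \<Longrightarrow> x \<le> y \<Longrightarrow> y \<le> 1 \<Longrightarrow> \<phi> y \<le> \<phi> x"
    and phi0: "\<phi> 0 = 1"
    and lam_pos: "0 < lam"
    and lam_not_nat: "lam \<notin> \<nat>"
    and inv: "\<And>i. i \<in> {0, 1} \<Longrightarrow>
       invertible_mat (transpose_mat (Xmat lam d i) * Wmat \<phi> lam i * Xmat lam d i)"
  shows "(\<exists>a. admissible_mask \<phi> lam d a \<and> lin_scheme lam a = wlpr \<phi> lam d) \<and>
         (\<forall>a. admissible_mask \<phi> lam d a \<longrightarrow> lin_scheme lam a = wlpr \<phi> lam d)"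
proof -
  have wnn: "\<And>m. 0 \<le> wt \<phi> lam m" by (rule wnn_lemma[OF phi_range])
  have uniq: "lin_scheme lam a = wlpr \<phi> lam d" if adm: "admissible_mask \<phi> lam d a" for a
  proof (rule scheme_eq[OF inv wnn])
    show "\<forall>i\<in>{0,1}. \<exists>\<alpha>. (\<forall>m\<in>Mset lam i. a m = wt \<phi> lam m * Xv d \<alpha> m)
              \<and> (\<forall>l\<le>d. Gf \<phi> lam d i \<alpha> l = (if l = 0 then 1 else 0))"
    proof
      fix i :: int assume i: "i \<in> {0, 1}"
      from adm i obtain \<alpha>v where \<alpha>v: "\<alpha>v \<in> carrier_vec (d+1)"
        and sm: "submask lam a i = Wmat \<phi> lam i *\<^sub>v (Xmat lam d i *\<^sub>v \<alpha>v)"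
        unfolding admissible_mask_def by blast
      let ?\<alpha> = "\<lambda>l. \<alpha>v $ l"
      have sm2: "submask lam a i = vec (length (Mlist lam i))
          (\<lambda>r. wt \<phi> lam (Mlist lam i ! r) * Xv d ?\<alpha> (Mlist lam i ! r))"
        unfolding sm X_mult[OF \<alpha>v] W_mult ..
      have a: "\<forall>m\<in>Mset lam i. a m = wt \<phi> lam m * Xv d ?\<alpha> m"
      proof
        fix m assume "m \<in> Mset lam i"
        then obtain r where r: "r < length (Mlist lam i)" "m = Mlist lam i ! r"
          by (metis set_Mlist in_set_conv_nth)
        have "submask lam a i $ r = a m" using r by (simp add: submask_def)
        moreover have "submask lam a i $ r = wt \<phi> lam m * Xv d ?\<alpha> m" unfolding sm2 using r by simp
        ultimately show "a m = wt \<phi> lam m * Xv d ?\<alpha> m" by simp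
      qed
      have "\<forall>l\<le>d. Gf \<phi> lam d i ?\<alpha> l = (if l = 0 then 1 else 0)"
      proof (intro allI impI)
        fix l assume l: "l \<le> d"
        have "Gf \<phi> lam d i ?\<alpha> l = (\<Sum>m\<in>Mset lam i. a m * real_of_int m ^ l)"
          unfolding Gf_def using a by (intro sum.cong) (auto simp: mult_ac)
        also have "\<dots> = (if l = 0 then 1 else 0)"
          by (rule moment[OF _ i l]) (use adm in \<open>simp add: admissible_mask_def\<close>)
        finally show "Gf \<phi> lam d i ?\<alpha> l = (if l = 0 then 1 else 0)" .
      qed
      with a show "\<exists>\<alpha>. (\<forall>m\<in>Mset lam i. a m = wt \<phi> lam m * Xv d \<alpha> m)
              \<and> (\<forall>l\<le>d. Gf \<phi> lam d i \<alpha> l = (if l = 0 then 1 else 0))" by blast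
    qed
  qed
  have inv0: "invertible_mat (transpose_mat (Xmat lam d 0) * Wmat \<phi> lam 0 * Xmat lam d 0)"
    by (rule inv) simp
  have inv1: "invertible_mat (transpose_mat (Xmat lam d 1) * Wmat \<phi> lam 1 * Xmat lam d 1)"
    by (rule inv) simp
  obtain \<alpha>0 where \<alpha>0: "\<forall>l\<le>d. Gf \<phi> lam d 0 \<alpha>0 l = (if l = 0 then 1 else 0)"
    using Gf_surj[OF inv0 wnn, of "\<lambda>l. if l = 0 then 1 else 0"] by blast
  obtain \<alpha>1 where \<alpha>1: "\<forall>l\<le>d. Gf \<phi> lam d 1 \<alpha>1 l = (if l = 0 then 1 else 0)"
    using Gf_surj[OF inv1 wnn, of "\<lambda>l. if l = 0 then 1 else 0"] by blast
  define a where "a m = wt \<phi> lam m * Xv d (if m mod 2 = 0 then \<alpha>0 else \<alpha>1) m" for m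
  have H: "\<forall>i\<in>{0,1}. \<exists>\<alpha>. (\<forall>m\<in>Mset lam i. a m = wt \<phi> lam m * Xv d \<alpha> m)
              \<and> (\<forall>l\<le>d. Gf \<phi> lam d i \<alpha> l = (if l = 0 then 1 else 0))"
  proof
    fix i :: int assume i: "i \<in> {0, 1}"
    show "\<exists>\<alpha>. (\<forall>m\<in>Mset lam i. a m = wt \<phi> lam m * Xv d \<alpha> m)
              \<and> (\<forall>l\<le>d. Gf \<phi> lam d i \<alpha> l = (if l = 0 then 1 else 0))"
    proof (intro exI[of _ "if i = 0 then \<alpha>0 else \<alpha>1"] conjI)
      show "\<forall>m\<in>Mset lam i. a m = wt \<phi> lam m * Xv d (if i = 0 then \<alpha>0 else \<alpha>1) m"
        using i by (auto simp: a_def Mset_def)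
      show "\<forall>l\<le>d. Gf \<phi> lam d i (if i = 0 then \<alpha>0 else \<alpha>1) l = (if l = 0 then 1 else 0)"
        using i \<alpha>0 \<alpha>1 by auto
    qed
  qed
  have eq: "lin_scheme lam a = wlpr \<phi> lam d" by (rule scheme_eq[OF inv wnn H])
  have adm: "admissible_mask \<phi> lam d a"
    unfolding admissible_mask_def
  proof
    show "reproduces d (lin_scheme lam a)" unfolding reproduces_def
    proof (intro allI impI ext)
      fix p :: "real poly" and k :: int assume dp: "degree p \<le> d"
      let ?i = "k mod 2"
      let ?j = "k div 2"
      have "?i = 0 \<or> ?i = 1" by presburger
      then have i: "?i \<in> {0, 1}" by blast
      from bspec[OF H i] obtain \<alpha> where a\<alpha>: "(\<forall>m\<in>Mset lam ?i. a m = wt \<phi> lam m * Xv d \<alpha> m)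
         \<and> (\<forall>l\<le>d. Gf \<phi> lam d ?i \<alpha> l = (if l = 0 then 1 else 0))" ..
      note aa = conjunct1[OF a\<alpha>] and \<alpha> = conjunct2[OF a\<alpha>]
      let ?q = "pcompose p [:real_of_int (2 * ?j + ?i), 1:]"
      have dq: "degree ?q \<le> d" using dp by (simp add: degree_pcompose)
      have "lin_scheme lam a (\<lambda>j. poly p (2 * of_int j)) k
          = (\<Sum>m\<in>Mset lam ?i. a m * poly p (2 * of_int (?j + (m + ?i) div 2)))"
        by (simp add: lin_scheme_def Let_def)
      also have "\<dots> = (\<Sum>m\<in>Mset lam ?i. a m * poly ?q (of_int m))"
      proof (intro sum.cong refl)
        fix m assume "m \<in> Mset lam ?i"
        then have "m mod 2 = ?i" by (simp add: Mset_def)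
        then have "2 * ((m + ?i) div 2) = m + ?i" by (rule twice_div[OF _ i])
        then have "2 * (?j + (m + ?i) div 2) = (2 * ?j + ?i) + m" by simp
        then have "2 * real_of_int (?j + (m + ?i) div 2) = real_of_int (2 * ?j + ?i) + real_of_int m"
          by (metis of_int_add of_int_mult of_int_numeral)
        then show "a m * poly p (2 * of_int (?j + (m + ?i) div 2)) = a m * poly ?q (of_int m)"
          by (simp add: poly_pcompose)
      qed
      also have "\<dots> = poly ?q 0" by (rule reprod[OF aa _ dq]) (use \<alpha> in auto)
      also have "\<dots> = poly p (of_int k)" by (simp add: poly_pcompose)
      finally show "lin_scheme lam a (\<lambda>j. poly p (2 * of_int j)) k = poly p (of_int k)" .
    qed
  next
    show "\<forall>i\<in>{0,1}. \<exists>\<alpha> \<in> carrier_vec (d + 1).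
        submask lam a i = Wmat \<phi> lam i *\<^sub>v (Xmat lam d i *\<^sub>v \<alpha>)"
    proof
      fix i :: int assume i: "i \<in> {0, 1}"
      from bspec[OF H i] obtain \<alpha> where a\<alpha>: "(\<forall>m\<in>Mset lam i. a m = wt \<phi> lam m * Xv d \<alpha> m)
         \<and> (\<forall>l\<le>d. Gf \<phi> lam d i \<alpha> l = (if l = 0 then 1 else 0))" ..
      note aa = conjunct1[OF a\<alpha>]
      show "\<exists>\<alpha> \<in> carrier_vec (d + 1). submask lam a i = Wmat \<phi> lam i *\<^sub>v (Xmat lam d i *\<^sub>v \<alpha>)"
      proof (rule bexI[of _ "vec (d+1) \<alpha>"])
        have "Wmat \<phi> lam i *\<^sub>v (Xmat lam d i *\<^sub>v vec (d+1) \<alpha>) = vec (length (Mlist lam i))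
          (\<lambda>r. wt \<phi> lam (Mlist lam i ! r) * Xv d (\<lambda>l. vec (d+1) \<alpha> $ l) (Mlist lam i ! r))"
          unfolding X_mult[OF vec_carrier] W_mult ..
        also have "\<dots> = submask lam a i" unfolding submask_def
        proof (intro eq_vecI)
          fix r assume "r < dim_vec (vec (length (Mlist lam i)) (\<lambda>r. a (Mlist lam i ! r)))"
          then have r: "r < length (Mlist lam i)" by simp
          then have "Mlist lam i ! r \<in> Mset lam i" by (metis nth_mem set_Mlist)
          then have "a (Mlist lam i ! r) = wt \<phi> lam (Mlist lam i ! r) * Xv d \<alpha> (Mlist lam i ! r)"
            using aa by blast
          moreover have "Xv d (\<lambda>l. vec (d+1) \<alpha> $ l) (Mlist lam i ! r) = Xv d \<alpha> (Mlist lam i ! r)"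
            by (rule Xv_cong) simp
          ultimately show "vec (length (Mlist lam i))
              (\<lambda>r. wt \<phi> lam (Mlist lam i ! r) * Xv d (\<lambda>l. vec (d+1) \<alpha> $ l) (Mlist lam i ! r)) $ r
            = vec (length (Mlist lam i)) (\<lambda>r. a (Mlist lam i ! r)) $ r" using r by simp
        qed simp
        finally show "submask lam a i = Wmat \<phi> lam i *\<^sub>v (Xmat lam d i *\<^sub>v vec (d+1) \<alpha>)" by simp
      qed simp
    qed
  qed
  show ?thesis using adm eq uniq by blast
qed

end
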